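(* Let $I$ be an open interval with $a=\inf I$, $S$ a nonempty set, $F:I\to S$, $\varphi\in\mathrm{Homeo}^+(I)$, and $t\in I$, and suppose $F$ is $\varphi$-invariant before $t$, i.e., $F(x)=F(\varphi(x))$ for all $x\in(a,t)$. Then there is a function $H:I\to S$ that extends $F|_{(a,t)}$ and is $\varphi$-invariant, i.e., $H=H\circ\varphi$.
   Context: $\mathrm{Homeo}^+(I)$ is the group of increasing homeomorphisms of $I$. *)

theory Defs
  imports "HOL-Analysis.Analysis"
begin

definition open_interval :: "real set \<Rightarrow> bool" where
  "open_interval I \<longleftrightarrow> I \<noteq> {} \<and> open I \<and> is_interval I"

definition homeo_plus :: "real set \<Rightarrow> (real \<Rightarrow> real) \<Rightarrow> bool" where
  "homeo_plus I \<phi> \<longleftrightarrow> (\<exists>\<psi>. homeomorphism I I \<phi> \<psi>) \<and> strict_mono_on I \<phi>"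

end

theory Submission
  imports Defs
begin

lemma iter_in:
  fixes \<phi> :: "real \<Rightarrow> real"
  assumes "\<forall>x\<in>I. \<phi> x \<in> I" "y \<in> I"
  shows "(\<phi>^^k) y \<in> I"
  using assms by (induction k) auto

lemma iter_inj:
  fixes \<phi> :: "real \<Rightarrow> real"
  assumes "\<forall>x\<in>I. \<phi> x \<in> I" "inj_on \<phi> I" "y \<in> I" "z \<in> I" "(\<phi>^^k) y = (\<phi>^^k) z"
  shows "y = z"
  using assms(3-5)
proof (induction k)
  case 0 then show ?case by simp
next
  case (Suc k)
  have "(\<phi>^^k) y \<in> I" "(\<phi>^^k) z \<in> I" using iter_in assms(1) Suc.prems by blast+
  then have "(\<phi>^^k) y = (\<phi>^^k) z" using Suc.prems(3) assms(2) by (auto dest: inj_onD)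
  then show ?case using Suc by blast
qed

lemma iter_up:
  fixes \<phi> :: "real \<Rightarrow> real"
  assumes "\<forall>x\<in>I. \<phi> x \<in> I" "\<forall>x\<in>I. \<forall>y\<in>I. x \<le> y \<longrightarrow> \<phi> x \<le> \<phi> y" "y \<in> I" "y \<le> \<phi> y" "j \<le> k"
  shows "(\<phi>^^j) y \<le> (\<phi>^^k) y"
proof -
  have step: "(\<phi>^^i) y \<le> (\<phi>^^Suc i) y" for i
  proof (induction i)
    case 0 then show ?case using assms by simp
  next
    case (Suc i)
    have "(\<phi>^^i) y \<in> I" "(\<phi>^^Suc i) y \<in> I" using iter_in assms(1,3) by blast+
    then show ?case using Suc assms(2) by simp
  qed
  show ?thesis using assms(5)
  proof (induction k)
    case 0 then show ?case by simp
  next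
    case (Suc k)
    show ?case
    proof (cases "j = Suc k")
      case True then show ?thesis by simp
    next
      case False
      then have "j \<le> k" using Suc.prems by simp
      then show ?thesis using Suc.IH step[of k] by linarith
    qed
  qed
qed

lemma iter_down:
  fixes \<phi> :: "real \<Rightarrow> real"
  assumes "\<forall>x\<in>I. \<phi> x \<in> I" "\<forall>x\<in>I. \<forall>y\<in>I. x \<le> y \<longrightarrow> \<phi> x \<le> \<phi> y" "y \<in> I" "\<phi> y \<le> y"
  shows "(\<phi>^^j) y \<le> y"
proof -
  have step: "(\<phi>^^Suc i) y \<le> (\<phi>^^i) y" for i
  proof (induction i)
    case 0 then show ?case using assms by simp
  next
    case (Suc i)
    have "(\<phi>^^i) y \<in> I" "(\<phi>^^Suc i) y \<in> I" using iter_in assms(1,3) by blast+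
    then show ?case using Suc assms(2) by simp
  qed
  show ?thesis
  proof (induction j)
    case 0 then show ?case by simp
  next
    case (Suc j)
    then show ?case using step[of j] by linarith
  qed
qed

lemma F_chain:
  fixes \<phi> :: "real \<Rightarrow> real"
  assumes "\<forall>x\<in>I. \<phi> x \<in> I" "\<forall>x\<in>I. \<forall>y\<in>I. x \<le> y \<longrightarrow> \<phi> x \<le> \<phi> y"
    and "\<forall>x\<in>I. x < t \<longrightarrow> F x = F (\<phi> x)"
    and "y \<in> I" "y < t" "(\<phi>^^k) y < t"
  shows "F y = F ((\<phi>^^k) y)"
proof -
  have below: "(\<phi>^^j) y < t" if "j \<le> k" for j
  proof (cases "y \<le> \<phi> y")
    case True
    show ?thesis using iter_up[OF assms(1,2,4) True that] assms(6) by (meson order_le_less_trans)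
  next
    case False
    then have "\<phi> y \<le> y" by simp
    then show ?thesis using iter_down[OF assms(1,2,4), of j] assms(5) by (meson order_le_less_trans)
  qed
  have "j \<le> k \<Longrightarrow> F y = F ((\<phi>^^j) y)" for j
  proof (induction j)
    case 0 then show ?case by simp
  next
    case (Suc j)
    have "(\<phi>^^j) y \<in> I" using iter_in assms(1,4) by blast
    moreover have "(\<phi>^^j) y < t" using below Suc.prems by simp
    ultimately show ?case using Suc assms(3) by simp
  qed
  then show ?thesis by simp
qed

theorem lemma3p1:
  fixes I :: "real set" and S :: "'b set" and F :: "real \<Rightarrow> 'b"
    and \<phi> :: "real \<Rightarrow> real" and t :: real
  assumes "open_interval I"
    and "S \<noteq> {}"
    and "F ` I \<subseteq> S"
    and "homeo_plus I \<phi>"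
    and "t \<in> I"
    and "\<forall>x\<in>I. x < t \<longrightarrow> F x = F (\<phi> x)"
  shows "\<exists>H. H ` I \<subseteq> S \<and> (\<forall>x\<in>I. x < t \<longrightarrow> H x = F x) \<and> (\<forall>x\<in>I. H x = H (\<phi> x))"
proof -
  from assms(4) obtain \<psi> where hom: "homeomorphism I I \<phi> \<psi>" and sm: "strict_mono_on I \<phi>"
    unfolding homeo_plus_def by blast
  have inI: "\<forall>x\<in>I. \<phi> x \<in> I" using hom unfolding homeomorphism_def by blast
  have mo: "\<forall>x\<in>I. \<forall>y\<in>I. x \<le> y \<longrightarrow> \<phi> x \<le> \<phi> y"
  proof (intro ballI impI)
    fix x y assume "x \<in> I" "y \<in> I" "x \<le> y"
    then show "\<phi> x \<le> \<phi> y"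
      by (cases "x = y") (auto dest: strict_mono_onD[OF sm])
  qed
  have inj: "inj_on \<phi> I" using sm strict_mono_on_imp_inj_on by blast
  define R where "R x y \<longleftrightarrow> (\<exists>n m. (\<phi>^^n) x = (\<phi>^^m) y)" for x y
  have Rsym: "R x y \<Longrightarrow> R y x" for x y unfolding R_def by metis
  have Rtrans: "R x y \<Longrightarrow> R y z \<Longrightarrow> R x z" for x y z
  proof -
    assume "R x y" "R y z"
    then obtain n m k l where 1: "(\<phi>^^n) x = (\<phi>^^m) y" and 2: "(\<phi>^^k) y = (\<phi>^^l) z"
      unfolding R_def by blast
    have "(\<phi>^^(k+n)) x = (\<phi>^^k) ((\<phi>^^m) y)" using 1 by (simp add: funpow_add)
    also have "\<dots> = (\<phi>^^(k+m)) y" by (simp add: funpow_add)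
    also have "\<dots> = (\<phi>^^(m+k)) y" by (simp add: add.commute)
    also have "\<dots> = (\<phi>^^m) ((\<phi>^^k) y)" by (simp add: funpow_add)
    also have "\<dots> = (\<phi>^^(m+l)) z" using 2 by (simp add: funpow_add)
    finally show "R x z" unfolding R_def by blast
  qed
  have Rphi: "R x (\<phi> x)" for x unfolding R_def
    by (rule exI[of _ 1], rule exI[of _ 0]) simp
  have key: "F y = F z" if yz: "y \<in> I" "z \<in> I" "y < t" "z < t" "R y z" for y z
  proof -
    obtain n m where e: "(\<phi>^^n) y = (\<phi>^^m) z" using yz(5) unfolding R_def by blast
    show ?thesis
    proof (cases "n \<le> m")
      case True
      have "(\<phi>^^n) y = (\<phi>^^n) ((\<phi>^^(m-n)) z)"
      proof -
        have "(\<phi>^^n) ((\<phi>^^(m-n)) z) = (\<phi>^^(n + (m-n))) z" by (simp add: funpow_add)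
        also have "n + (m-n) = m" using True by simp
        finally show ?thesis using e by simp
      qed
      then have "y = (\<phi>^^(m-n)) z"
        using iter_inj[OF inI inj yz(1)] iter_in[OF inI yz(2)] by blast
      then show ?thesis using F_chain[OF inI mo assms(6) yz(2) yz(4)] yz(3) by simp
    next
      case False
      have "(\<phi>^^m) z = (\<phi>^^m) ((\<phi>^^(n-m)) y)"
      proof -
        have "(\<phi>^^m) ((\<phi>^^(n-m)) y) = (\<phi>^^(m + (n-m))) y" by (simp add: funpow_add)
        also have "m + (n-m) = n" using False by simp
        finally show ?thesis using e by simp
      qed
      then have "z = (\<phi>^^(n-m)) y"
        using iter_inj[OF inI inj yz(2)] iter_in[OF inI yz(1)] by blast
      then show ?thesis using F_chain[OF inI mo assms(6) yz(1) yz(3)] yz(4) by simp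
    qed
  qed
  define H where "H x = (if \<exists>y. y \<in> I \<and> y < t \<and> R x y
      then F (SOME y. y \<in> I \<and> y < t \<and> R x y) else F t)" for x
  have "H ` I \<subseteq> S"
  proof
    fix v assume "v \<in> H ` I"
    then obtain x where "v = H x" by blast
    show "v \<in> S"
    proof (cases "\<exists>y. y \<in> I \<and> y < t \<and> R x y")
      case True
      then have "(SOME y. y \<in> I \<and> y < t \<and> R x y) \<in> I" by (metis (mono_tags, lifting) someI_ex)
      then show ?thesis using True \<open>v = H x\<close> assms(3) unfolding H_def by auto
    next
      case False
      then show ?thesis using \<open>v = H x\<close> assms(3,5) unfolding H_def by auto
    qed
  qed
  moreover have "\<forall>x\<in>I. x < t \<longrightarrow> H x = F x"
  proof (intro ballI impI)
    fix x assume x: "x \<in> I" "x < t"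
    have ex: "\<exists>y. y \<in> I \<and> y < t \<and> R x y" using x unfolding R_def by blast
    then have s: "(SOME y. y \<in> I \<and> y < t \<and> R x y) \<in> I \<and> (SOME y. y \<in> I \<and> y < t \<and> R x y) < t
      \<and> R x (SOME y. y \<in> I \<and> y < t \<and> R x y)" by (rule someI_ex)
    show "H x = F x" unfolding H_def using ex key[OF x(1) _ x(2)] s by auto
  qed
  moreover have "\<forall>x\<in>I. H x = H (\<phi> x)"
  proof
    fix x assume "x \<in> I"
    have eq: "R x y = R (\<phi> x) y" for y
      using Rtrans[OF Rsym[OF Rphi[of x]], of y] Rtrans[OF Rphi[of x], of y] by blast
    show "H x = H (\<phi> x)" by (simp only: H_def eq)
  qed
  ultimately show ?thesis by blast
qed

end
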